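(* Let $n\ge 2$, let $a_1,\dots,a_n$ be positive integers, and let $s=[2a_1,-2a_2,2a_3,\dots,(-1)^{n-1}2a_n]$ and $s'=[2a_1,-2a_2,\dots,(-1)^{n-2}2a_{n-1}]$. Then $\Delta_{K(s)}(t)$ and $\Delta_{K(s')}(t)$ have only real zeros, the product $\Delta_{K(s)}(t)\Delta_{K(s')}(t)$ has no repeated zeros, and the zeros of $\Delta_{K(s)}(t)$ and $\Delta_{K(s')}(t)$ are interlaced.
   Context: For a finite sequence $r=[2a_1,2a_2,\dots,2a_n]$ of nonzero even integers, $K(r)$ denotes the 2-bridge knot or link whose associated rational number has the even continued fraction expansion $1/(2a_1-1/(2a_2-\cdots-1/(2a_n)))$. Let $M(r)$ be the $n\times n$ integer matrix whose $(k,k)$-entry is $a_k$, whose $(k,k+1)$-entry is $1$ ($1\le k\le n-1$), and whose other entries are $0$; $\Delta_{K(r)}(t)=\det(tM(r)-M(r)^T)$ is the (reduced) Alexander polynomial of $K(r)$ (up to sign). Interlacing: two real-rooted polynomials with zeros $\alpha_1\le\dots\le\alpha_n$ and $\beta_1\le\dots\le\beta_m$ (with multiplicity) are interlaced if $|m-n|\le1$ and the zeros alternate: if $n=m$, either $\alpha_1\le\beta_1\le\alpha_2\le\dots\le\alpha_n\le\beta_n$ or $\beta_1\le\alpha_1\le\dots\le\beta_n\le\alpha_n$; if $n=m+1$, $\alpha_1\le\beta_1\le\alpha_2\le\dots\le\beta_m\le\alpha_{m+1}$; if $m=n+1$, $\beta_1\le\alpha_1\le\beta_2\le\dots\le\alpha_n\le\beta_{n+1}$.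 *)

theory Defs
  imports "Jordan_Normal_Form.Determinant" "HOL-Computational_Algebra.Computational_Algebra"
begin

text \<open>The matrix M(r) for a sequence r = [2a_1,...,2a_n] of nonzero even integers
  (given as the list of the even integers 2a_k; the diagonal entry is a_k = r_k div 2).\<close>
definition seifert_mat :: "int list \<Rightarrow> int mat" where
  "seifert_mat r = mat (length r) (length r)
     (\<lambda>(i,j). if i = j then r ! i div 2 else if j = i + 1 then 1 else 0)"

definition alexander_poly :: "int list \<Rightarrow> int poly" where
  "alexander_poly r = det (mat (length r) (length r)
     (\<lambda>(i,j). [: - (seifert_mat r $$ (j,i)), seifert_mat r $$ (i,j) :]))"

definition alexander_poly_real :: "int list \<Rightarrow> real poly" where
  "alexander_poly_real r = map_poly of_int (alexander_poly r)"

definition real_rooted :: "real poly \<Rightarrow> bool" where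
  "real_rooted p \<longleftrightarrow> (\<forall>z::complex. poly (map_poly complex_of_real p) z = 0 \<longrightarrow> z \<in> \<real>)"

definition no_repeated_zeros :: "real poly \<Rightarrow> bool" where
  "no_repeated_zeros p \<longleftrightarrow> rsquarefree (map_poly complex_of_real p)"

definition interlaced_lists :: "real list \<Rightarrow> real list \<Rightarrow> bool" where
  "interlaced_lists al be \<longleftrightarrow>
    (length al = length be \<and>
       ((\<forall>i<length al. al ! i \<le> be ! i) \<and> (\<forall>i. i + 1 < length al \<longrightarrow> be ! i \<le> al ! (i+1))
      \<or> (\<forall>i<length al. be ! i \<le> al ! i) \<and> (\<forall>i. i + 1 < length al \<longrightarrow> al ! i \<le> be ! (i+1))))
  \<or> (length al = length be + 1 \<and>
       (\<forall>i<length be. al ! i \<le> be ! i \<and> be ! i \<le> al ! (i+1)))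
  \<or> (length be = length al + 1 \<and>
       (\<forall>i<length al. be ! i \<le> al ! i \<and> al ! i \<le> be ! (i+1)))"

definition interlaced :: "real poly \<Rightarrow> real poly \<Rightarrow> bool" where
  "interlaced p q \<longleftrightarrow>
     interlaced_lists (sorted_list_of_multiset (proots p)) (sorted_list_of_multiset (proots q))"

end

theory Submission
  imports Defs "Jordan_Normal_Form.Char_Poly"
begin



definition tri :: "(nat \<Rightarrow> 'a) \<Rightarrow> (nat \<Rightarrow> 'a) \<Rightarrow> (nat \<Rightarrow> 'a) \<Rightarrow> nat \<Rightarrow> 'a::comm_ring_1 mat" where
 "tri d u l m = mat m m (\<lambda>(i,j). if i = j then d i else if j = i+1 then u i else if i = j+1 then l j else 0)"

lemma tri_carrier: "tri d u l m \<in> carrier_mat m m" by (simp add: tri_def)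
lemma tri_1: "det (tri d u l 1) = d 0"
proof -
  have c: "mat_delete (tri d u l 1) 0 0 \<in> carrier_mat 0 0"
    using mat_delete_carrier[OF tri_carrier, of d u l 1 0 0] by simp
  have e: "tri d u l 1 $$ (0,0) = d 0" by (simp add: tri_def)
  have "det (tri d u l 1) = (\<Sum>j<1. tri d u l 1 $$ (0,j) * cofactor (tri d u l 1) 0 j)"
    by (rule laplace_expansion_row[OF tri_carrier]) simp
  also have "\<dots> = tri d u l 1 $$ (0,0) * cofactor (tri d u l 1) 0 0" by simp
  also have "\<dots> = d 0" unfolding e cofactor_def det_dim_zero[OF c] by simp
  finally show ?thesis .
qed

lemma tri_rec: "det (tri d u l (Suc (Suc k))) = d (Suc k) * det (tri d u l (Suc k)) - u k * l k * det (tri d u l k)"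
proof -
  define A where "A = tri d u l (Suc (Suc k))"
  have A: "A \<in> carrier_mat (Suc (Suc k)) (Suc (Suc k))" unfolding A_def by (rule tri_carrier)
  have md: "mat_delete A (Suc k) (Suc k) = tri d u l (Suc k)"
    unfolding A_def by (rule eq_matI) (auto simp: tri_def mat_delete_def)
  have z1: "(\<Sum>j<k. A $$ (Suc k,j) * cofactor A (Suc k) j) = 0"
    unfolding A_def by (rule sum.neutral) (auto simp: tri_def)
  have e1: "A $$ (Suc k,k) = l k" "A $$ (Suc k,Suc k) = d (Suc k)" by (simp_all add: A_def tri_def)
  have c1: "cofactor A (Suc k) (Suc k) = det (mat_delete A (Suc k) (Suc k))"
    "cofactor A (Suc k) k = - det (mat_delete A (Suc k) k)" by (simp_all add: cofactor_def)
  have "det A = (\<Sum>j<Suc (Suc k). A $$ (Suc k,j) * cofactor A (Suc k) j)"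
    by (rule laplace_expansion_row[OF A]) simp
  also have "\<dots> = (\<Sum>j<k. A $$ (Suc k,j) * cofactor A (Suc k) j) + A $$ (Suc k,k) * cofactor A (Suc k) k
      + A $$ (Suc k,Suc k) * cofactor A (Suc k) (Suc k)" by simp
  finally have 1: "det A = l k * (- det (mat_delete A (Suc k) k)) + d (Suc k) * det (tri d u l (Suc k))"
    unfolding z1 e1 c1 md by simp
  define B where "B = mat_delete A (Suc k) k"
  have B: "B \<in> carrier_mat (Suc k) (Suc k)" unfolding B_def using mat_delete_carrier[OF A] by simp
  have mdB: "mat_delete B k k = tri d u l k"
    unfolding B_def A_def by (rule eq_matI) (auto simp: tri_def mat_delete_def)
  have z2: "(\<Sum>i<k. B $$ (i,k) * cofactor B i k) = 0"
    unfolding B_def A_def by (rule sum.neutral) (auto simp: tri_def mat_delete_def)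
  have e2: "B $$ (k,k) = u k" by (simp add: B_def A_def tri_def mat_delete_def)
  have c2: "cofactor B k k = det (mat_delete B k k)" by (simp add: cofactor_def)
  have "det B = (\<Sum>i<Suc k. B $$ (i,k) * cofactor B i k)"
    by (rule laplace_expansion_column[OF B]) simp
  also have "\<dots> = (\<Sum>i<k. B $$ (i,k) * cofactor B i k) + B $$ (k,k) * cofactor B k k" by simp
  finally have 2: "det B = u k * det (tri d u l k)" unfolding z2 e2 c2 mdB by simp
  have "det A = l k * (- (u k * det (tri d u l k))) + d (Suc k) * det (tri d u l (Suc k))"
    using 1 2 unfolding B_def by simp
  also have "\<dots> = d (Suc k) * det (tri d u l (Suc k)) - u k * l k * det (tri d u l k)"
    by (simp add: algebra_simps)
  finally show ?thesis by (simp add: A_def)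
qed


lemma roots_full:
  fixes p :: "'a::idom poly"
  assumes "p \<noteq> 0" "degree p \<le> length zs" "distinct zs" "\<forall>z\<in>set zs. poly p z = 0"
  shows "proots p = mset zs"
proof -
  have sub: "mset zs \<subseteq># proots p"
    unfolding subseteq_mset_def
  proof
    fix x
    show "count (mset zs) x \<le> count (proots p) x"
    proof (cases "x \<in> set zs")
      case True
      then have "order x p \<noteq> 0" using assms(1,4) order_root by blast
      then show ?thesis using assms(1,3) True by (simp add: count_proots distinct_count_atmost_1)
    next
      case False
      then show ?thesis by (metis count_eq_zero_iff le0 set_mset_mset)
    qed
  qed
  have "size (proots p) \<le> size (mset zs)" using size_proots_le[of p] assms(2) by simp
  then show ?thesis using sub
    by (metis subset_mset.le_less mset_subset_size not_le)
qed


lemma poly_prod_lin: "poly (\<Prod>y\<leftarrow>ys. [:-y,1:]) x = (\<Prod>y\<leftarrow>ys. (x - y))"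
  for x :: "'a::comm_ring_1"
  by (induction ys) (auto simp: algebra_simps)


lemma factor_full:
  fixes p :: "'a::idom poly"
  assumes "p \<noteq> 0" "degree p = length zs" "distinct zs" "\<forall>z\<in>set zs. poly p z = 0"
  shows "p = smult (lead_coeff p) (\<Prod>y\<leftarrow>zs. [:-y,1:])"
  using assms
proof (induction zs arbitrary: p)
  case Nil
  then have "degree p = 0" by simp
  then obtain c where "p = [:c:]" by (rule degree_eq_zeroE)
  then show ?case by simp
next
  case (Cons y zs)
  have "[:-y,1:] dvd p" using Cons.prems(4) by (simp add: poly_eq_0_iff_dvd)
  then obtain q where q: "p = [:-y,1:] * q" by (auto elim: dvdE)
  have q0: "q \<noteq> 0" using Cons.prems(1) q by auto
  have "degree p = degree [:-y,1:] + degree q" unfolding q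
    by (rule degree_mult_eq) (use q0 in auto)
  then have dq: "degree q = length zs" using Cons.prems(2) by simp
  have rq: "\<forall>z\<in>set zs. poly q z = 0"
  proof
    fix z assume z: "z \<in> set zs"
    then have "z \<noteq> y" using Cons.prems(3) by auto
    moreover have "poly p z = 0" using Cons.prems(4) z by auto
    ultimately show "poly q z = 0" using q by simp
  qed
  have IH: "q = smult (lead_coeff q) (\<Prod>y\<leftarrow>zs. [:-y,1:])"
    using Cons.IH[OF q0 dq _ rq] Cons.prems(3) by simp
  have "lead_coeff p = lead_coeff [:-y,1:] * lead_coeff q" unfolding q by (rule lead_coeff_mult)
  then have "lead_coeff p = lead_coeff q" by simp
  have "p = [:-y,1:] * smult (lead_coeff q) (\<Prod>y\<leftarrow>zs. [:-y,1:])" using q IH by simp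
  also have "\<dots> = smult (lead_coeff p) (\<Prod>y\<leftarrow>y#zs. [:-y,1:])"
    using \<open>lead_coeff p = lead_coeff q\<close> by (simp only: mult_smult_right list.map prod_list.Cons)
  finally show ?case .
qed


lemma sgn_prod_lin:
  fixes w :: real
  assumes "w \<notin> set ys"
  shows "sgn (\<Prod>y\<leftarrow>ys. (w - y)) = (-1) ^ length (filter (\<lambda>y. w < y) ys)"
  using assms
proof (induction ys)
  case Nil then show ?case by simp
next
  case (Cons y ys)
  have IH: "sgn (\<Prod>y\<leftarrow>ys. (w - y)) = (-1) ^ length (filter (\<lambda>y. w < y) ys)" using Cons by simp
  have "sgn (\<Prod>y\<leftarrow>y#ys. (w - y)) = sgn (w - y) * sgn (\<Prod>y\<leftarrow>ys. (w - y))"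
    by (simp only: list.map prod_list.Cons sgn_mult)
  also have "\<dots> = sgn (w - y) * (-1) ^ length (filter (\<lambda>y. w < y) ys)" by (simp only: IH)
  also have "\<dots> = (-1) ^ length (filter (\<lambda>y. w < y) (y#ys))"
  proof (cases "w < y")
    case True then show ?thesis by simp
  next
    case False then have "y < w" using Cons.prems by auto
    then show ?thesis using False by simp
  qed
  finally show ?case .
qed


lemma count_above:
  fixes ys :: "real list"
  assumes "sorted_wrt (<) ys" "j \<le> length ys"
    "j > 0 \<Longrightarrow> ys ! (j-1) < w" "j < length ys \<Longrightarrow> w < ys ! j"
  shows "length (filter (\<lambda>y. w < y) ys) = length ys - j"
proof -
  have key: "w < ys ! i \<longleftrightarrow> j \<le> i" if i: "i < length ys" for i
  proof
    assume wi: "w < ys ! i"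
    show "j \<le> i"
    proof (rule ccontr)
      assume "\<not> j \<le> i"
      then have ij: "i < j" by simp
      have jl: "j - 1 < length ys" using ij assms(2) by simp
      have "ys ! i \<le> ys ! (j-1)"
      proof (cases "i = j - 1")
        case False
        then have "i < j - 1" using ij by simp
        then show ?thesis using sorted_wrt_nth_less[OF assms(1) _ jl] by (simp add: less_imp_le)
      qed simp
      then show False using assms(3) wi ij by auto
    qed
  next
    assume ji: "j \<le> i"
    have "ys ! j \<le> ys ! i"
    proof (cases "j = i")
      case False
      then have "j < i" using ji by simp
      then show ?thesis using sorted_wrt_nth_less[OF assms(1) _ i] by (simp add: less_imp_le)
    qed simp
    then show "w < ys ! i" using assms(4) ji i by auto
  qed
  have "{i. i < length ys \<and> w < ys ! i} = {j..<length ys}" using key by auto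
  then show ?thesis by (simp add: length_filter_conv_card)
qed



fun E :: "(nat \<Rightarrow> real) \<Rightarrow> nat \<Rightarrow> real poly" where
  "E a 0 = 1"
| "E a (Suc 0) = smult (a 1) [:-1,1:]"
| "E a (Suc (Suc k)) = smult (a (Suc (Suc k))) [:-1,1:] * E a (Suc k) - [:0,1:] * E a k"

lemma E_poly2: "poly (E a (Suc (Suc k))) x = a (Suc (Suc k)) * (x - 1) * poly (E a (Suc k)) x - x * poly (E a k) x"
  by (simp add: algebra_simps)

lemma E_deg: "degree (E a k) \<le> k \<and> coeff (E a k) k = (\<Prod>i=1..k. a i)"
proof (induction a k rule: E.induct)
  case (1 a) then show ?case by simp
next
  case (2 a) then show ?case by (simp add: degree_smult_le)
next
  case (3 a k)
  let ?p1 = "E a (Suc k)" and ?p0 = "E a k" and ?c = "a (Suc (Suc k))"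
  have d1: "degree (smult ?c [:-1,1:] * ?p1) \<le> Suc (Suc k)"
    using degree_mult_le[of "smult ?c [:-1,1:]" ?p1] degree_smult_le[of ?c "[:-1,1:]"] 3 by simp
  have d0: "degree ([:0,1:] * ?p0) \<le> Suc (Suc k)"
    using degree_mult_le[of "[:0,1:]" ?p0] 3 by simp
  have deg: "degree (E a (Suc (Suc k))) \<le> Suc (Suc k)"
    using degree_diff_le[OF d1 d0] by simp
  have z1: "coeff ?p1 (Suc (Suc k)) = 0" using 3 by (intro coeff_eq_0) simp
  have z0: "coeff ?p0 (Suc k) = 0" using 3 by (intro coeff_eq_0) simp
  have "coeff (E a (Suc (Suc k))) (Suc (Suc k)) = ?c * coeff ?p1 (Suc k)"
    using z1 z0 by (simp add: mult_pCons_left)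
  also have "\<dots> = (\<Prod>i=1..Suc (Suc k). a i)" using 3 by (simp add: prod.cl_ivl_Suc)
  finally show ?case using deg by simp
qed

lemma E_at0: "poly (E a k) 0 = (-1)^k * (\<Prod>i=1..k. a i)"
proof (induction a k rule: E.induct)
  case (3 a k)
  then show ?case by (simp add: prod.cl_ivl_Suc)
qed simp_all




lemma prod_pos_a:
  fixes a :: "nat \<Rightarrow> real" and n k :: nat
  assumes "\<forall>i. 1 \<le> i \<and> i \<le> n \<longrightarrow> a i > 0" "k \<le> n"
  shows "(\<Prod>i=1..k. a i) > 0"
proof (intro prod_pos)
  fix i assume "i \<in> {1..k}"
  then have "1 \<le> i \<and> i \<le> n" using assms(2) by simp
  then show "0 < a i" using assms(1) by blast
qed

lemma E_degree: assumes "\<forall>i. 1 \<le> i \<and> i \<le> n \<longrightarrow> a i > 0" "k \<le> n"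
  shows "degree (E a k) = k" "lead_coeff (E a k) = (\<Prod>i=1..k. a i)" "E a k \<noteq> 0"
proof -
  have cc: "coeff (E a k) k = (\<Prod>i=1..k. a i)" using E_deg[of a k] by blast
  have c: "coeff (E a k) k \<noteq> 0" using cc prod_pos_a[OF assms] by (metis order_less_irrefl)
  show d: "degree (E a k) = k" using E_deg[of a k] le_degree[OF c] by simp
  show "lead_coeff (E a k) = (\<Prod>i=1..k. a i)" using d E_deg[of a k] by simp
  show "E a k \<noteq> 0" using c by auto
qed

lemma sorted_less_distinct: "sorted_wrt (<) (ys::real list) \<Longrightarrow> distinct ys"
  by (induction ys) auto

definition Inv :: "(nat \<Rightarrow> real) \<Rightarrow> nat \<Rightarrow> real list \<Rightarrow> bool" where
  "Inv a k ys \<longleftrightarrow> length ys = k \<and> sorted_wrt (<) ys \<and> (\<forall>y\<in>set ys. 0 < y \<and> poly (E a k) y = 0)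
     \<and> (\<forall>i<k. sgn (poly (E a (k-1)) (ys!i)) = (-1)^(k-1-i))"

lemma sgn_neg_lt: "sgn (z::real) = -1 \<Longrightarrow> z < 0"
  by (auto simp: sgn_if split: if_splits)

lemma Inv_step:
  assumes apos: "\<forall>i. 1 \<le> i \<and> i \<le> n \<longrightarrow> a i > 0" and k1: "1 \<le> k" and kn: "Suc k \<le> n"
    and inv: "Inv a k ys"
  shows "\<exists>ws. Inv a (Suc k) ws \<and> (\<forall>i<k. ws!i < ys!i \<and> ys!i < ws!(Suc i))"
proof -
  obtain kk where k: "k = Suc kk" using k1 by (cases k) auto
  define p where "p = E a (Suc k)"
  define q where "q = E a k"
  define r where "r = E a kk"
  have len: "length ys = k" and srt: "sorted_wrt (<) ys"
    and roots: "\<forall>y\<in>set ys. 0 < y \<and> poly q y = 0"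
    and sg: "\<forall>i<k. sgn (poly r (ys!i)) = (-1)^(kk-i)"
    using inv unfolding Inv_def q_def r_def k by auto
  have pq: "poly p x = a (Suc k) * (x - 1) * poly q x - x * poly r x" for x
    unfolding p_def q_def r_def k by (rule E_poly2)
  have ysi: "ys ! i \<in> set ys" if "i < k" for i using that len by simp
  have pos: "0 < ys ! i" "poly q (ys!i) = 0" if "i < k" for i using roots ysi[OF that] by auto
  have sgys: "sgn (poly p (ys!i)) = (-1)^(k-i)" if i: "i < k" for i
  proof -
    have "poly p (ys!i) = - (ys!i) * poly r (ys!i)" using pq pos[OF i] by simp
    then have "sgn (poly p (ys!i)) = - sgn (poly r (ys!i))" using pos[OF i] by (simp add: sgn_mult)
    also have "\<dots> = - ((-1)^(kk-i))" using sg i by simp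
    also have "\<dots> = (-1)^(k-i)" using i k by (simp add: Suc_diff_le)
    finally show ?thesis .
  qed
  have sg0: "sgn (poly p 0) = (-1)^(Suc k)"
  proof -
    have "(\<Prod>i=1..Suc k. a i) > 0" using prod_pos_a[OF apos kn] .
    moreover have "sgn ((-1::real)^m * P) = (-1)^m" if "P > 0" for m P
      using that by (cases "even m") (auto simp: sgn_mult)
    ultimately show ?thesis unfolding p_def E_at0 by blast
  qed
  have lcp: "lead_coeff p > 0" using E_degree[OF apos kn] prod_pos_a[OF apos kn] unfolding p_def by simp
  obtain n0 where n0: "\<forall>x\<ge>n0. lead_coeff p \<le> poly p x" using poly_pinfty_gt_lc[OF lcp] by blast
  define M where "M = max n0 (ys!(k-1) + 1)"
  have M1: "ys!(k-1) < M" unfolding M_def by simp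
  have M2: "poly p M > 0" using n0 lcp unfolding M_def by (meson max.cobounded1 order_less_le_trans)
  have Mpos: "M > 0" using M1 pos(1)[of "k-1"] k by simp
  define b where "b j = (if j = 0 then 0 else if j \<le> k then ys!(j-1) else M)" for j
  have bsign: "sgn (poly p (b j)) = (-1)^(Suc k - j)" if jk: "j \<le> Suc k" for j
  proof -
    consider "j = 0" | "1 \<le> j" "j \<le> k" | "j = Suc k" using jk by linarith
    then show ?thesis
    proof cases
      case 1 then show ?thesis using sg0 by (simp add: b_def)
    next
      case 2
      then have "b j = ys!(j-1)" by (simp add: b_def)
      moreover have "sgn (poly p (ys!(j-1))) = (-1)^(k-(j-1))" using sgys 2 by simp
      moreover have "k - (j-1) = Suc k - j" using 2 by simp
      ultimately show ?thesis by simp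
    next
      case 3 then show ?thesis using M2 by (simp add: b_def)
    qed
  qed
  have bstrict: "b i < b j" if ij: "i < j" "j \<le> Suc k" for i j
  proof -
    consider "i = 0" "j \<le> k" | "i = 0" "j = Suc k" | "1 \<le> i" "j \<le> k" | "1 \<le> i" "j = Suc k"
      using ij by linarith
    then show ?thesis
    proof cases
      case 1 then show ?thesis using pos(1)[of "j-1"] ij by (simp add: b_def)
    next
      case 2 then show ?thesis using Mpos by (simp add: b_def)
    next
      case 3 then show ?thesis using ij sorted_wrt_nth_less[OF srt, of "i-1" "j-1"] len
        by (simp add: b_def)
    next
      case 4
      have "ys!(i-1) \<le> ys!(k-1)"
      proof (cases "i = k")
        case False
        then have "i - 1 < k - 1" using 4 ij by simp
        then show ?thesis using sorted_wrt_nth_less[OF srt, of "i-1" "k-1"] len k by (simp add: less_imp_le)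
      qed simp
      then show ?thesis using 4 ij M1 by (simp add: b_def)
    qed
  qed
  have b0: "0 \<le> b j" if "j \<le> Suc k" for j
    using bstrict[of 0 j] that by (cases "j = 0") (auto simp: b_def)
  have "\<exists>w. b j < w \<and> w < b (Suc j) \<and> poly p w = 0" if j: "j \<le> k" for j
  proof -
    have "sgn (poly p (b j) * poly p (b (Suc j))) = (-1)^(Suc k - j) * (-1)^(Suc k - Suc j)"
      using bsign[of j] bsign[of "Suc j"] j by (simp add: sgn_mult)
    also have "\<dots> = -1" using j by (simp add: Suc_diff_le)
    finally have "poly p (b j) * poly p (b (Suc j)) < 0" by (rule sgn_neg_lt)
    then show ?thesis using poly_IVT[OF bstrict[of j "Suc j"]] j by auto
  qed
  then have "\<forall>j. \<exists>w. j \<le> k \<longrightarrow> b j < w \<and> w < b (Suc j) \<and> poly p w = 0" by blast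
  then obtain W where W: "\<And>j. j \<le> k \<Longrightarrow> b j < W j \<and> W j < b (Suc j) \<and> poly p (W j) = 0"
    using choice by metis
  define ws where "ws = map W [0..<Suc k]"
  have wsn: "ws ! j = W j" if "j < Suc k" for j using that by (simp add: ws_def del: upt_Suc)
  have lenw: "length ws = Suc k" by (simp add: ws_def del: upt_Suc)
  have bys: "b (Suc i) = ys ! i" if "i < k" for i using that by (simp add: b_def)
  have qfac: "poly q x = lead_coeff q * (\<Prod>y\<leftarrow>ys. (x - y))" for x
  proof -
    have "q = smult (lead_coeff q) (\<Prod>y\<leftarrow>ys. [:-y,1:])"
      by (rule factor_full) (use E_degree[OF apos, of k] kn len roots sorted_less_distinct[OF srt] in \<open>auto simp: q_def\<close>)
    then show ?thesis by (metis poly_prod_lin poly_smult)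
  qed
  have lcq: "lead_coeff q > 0" using E_degree[OF apos, of k] prod_pos_a[OF apos, of k] kn unfolding q_def by simp
  have sgq: "sgn (poly q (W j)) = (-1)^(k - j)" if j: "j \<le> k" for j
  proof -
    have notin: "W j \<notin> set ys"
    proof
      assume "W j \<in> set ys"
      then obtain i where i: "i < k" "ys ! i = W j" using len by (auto simp: in_set_conv_nth)
      show False
      proof (cases "i < j")
        case True
        then have "b (Suc i) \<le> b j" using bstrict[of "Suc i" j] j by (cases "Suc i = j") auto
        then show False using W[OF j] bys[OF i(1)] i by simp
      next
        case False
        then have "b (Suc j) \<le> b (Suc i)" using bstrict[of "Suc j" "Suc i"] i by (cases "j = i") auto
        then show False using W[OF j] bys[OF i(1)] i by simp
      qed
    qed
    have c1: "ys ! (j-1) < W j" if "0 < j"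
      using W[OF j] that j by (simp add: b_def)
    have c2: "W j < ys ! j" if "j < k"
      using W[OF j] bys[OF that] by simp
    have cnt: "length (filter (\<lambda>y. W j < y) ys) = k - j"
      using count_above[OF srt, of j "W j"] len j c1 c2 by simp
    have "sgn (poly q (W j)) = sgn (lead_coeff q) * sgn (\<Prod>y\<leftarrow>ys. (W j - y))"
      by (simp add: qfac sgn_mult)
    also have "\<dots> = (-1)^(k-j)" using lcq sgn_prod_lin[OF notin] cnt by simp
    finally show ?thesis .
  qed
  have "Inv a (Suc k) ws"
    unfolding Inv_def
  proof (intro conjI)
    show "length ws = Suc k" by (rule lenw)
    show "sorted_wrt (<) ws"
      unfolding sorted_wrt_iff_nth_less lenw
    proof (intro allI impI)
      fix i j assume ij: "i < j" "j < Suc k"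
      have "b (Suc i) \<le> b j" using bstrict[of "Suc i" j] ij by (cases "Suc i = j") auto
      then show "ws ! i < ws ! j" using W[of i] W[of j] ij wsn by fastforce
    qed
    show "\<forall>y\<in>set ws. 0 < y \<and> poly (E a (Suc k)) y = 0"
    proof
      fix y assume "y \<in> set ws"
      then obtain j where j: "j < Suc k" "y = W j" by (auto simp: ws_def simp del: upt_Suc)
      then have j: "j \<le> k" "y = W j" by simp_all
      then show "0 < y \<and> poly (E a (Suc k)) y = 0" using W[OF j(1)] b0[of j] unfolding p_def by auto
    qed
    show "\<forall>i<Suc k. sgn (poly (E a (Suc k - 1)) (ws ! i)) = (-1) ^ (Suc k - 1 - i)"
      using sgq wsn unfolding q_def by simp
  qed
  moreover have "\<forall>i<k. ws!i < ys!i \<and> ys!i < ws!(Suc i)"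
  proof (intro allI impI)
    fix i assume i: "i < k"
    have "W i < b (Suc i)" "b (Suc i) < W (Suc i)" using W[of i] W[of "Suc i"] i by auto
    then show "ws!i < ys!i \<and> ys!i < ws!(Suc i)" using wsn[of i] wsn[of "Suc i"] bys[OF i] i by simp
  qed
  ultimately show ?thesis by blast
qed

lemma Inv_exists:
  assumes apos: "\<forall>i. 1 \<le> i \<and> i \<le> n \<longrightarrow> a i > 0"
  shows "1 \<le> k \<Longrightarrow> k \<le> n \<Longrightarrow> \<exists>ys. Inv a k ys"
proof (induction k)
  case 0 then show ?case by simp
next
  case (Suc k)
  show ?case
  proof (cases "k = 0")
    case True
    have "Inv a 1 [1]" by (simp add: Inv_def)
    then show ?thesis using True by auto
  next
    case False
    then obtain ys where ys: "Inv a k ys" using Suc by auto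
    have "1 \<le> k" using False by simp
    then show ?thesis using Inv_step[OF apos _ Suc.prems(2) ys] by blast
  qed
qed




lemma tri_cong: "(\<And>i. i < m \<Longrightarrow> d i = d' i) \<Longrightarrow> tri d u l m = tri d' u l m"
  by (rule eq_matI) (auto simp: tri_def)

lemma alex_tri: "alexander_poly r = det (tri (\<lambda>i. [:-(r!i div 2), r!i div 2:]) (\<lambda>_. [:0,1:]) (\<lambda>_. [:-1,0:]) (length r))"
  unfolding alexander_poly_def
  by (rule arg_cong[where f=det], rule eq_matI) (auto simp: tri_def seifert_mat_def)

definition gA :: "(nat \<Rightarrow> int) \<Rightarrow> nat \<Rightarrow> int" where "gA a i = (-1)^i * a (Suc i)"

definition G :: "(nat \<Rightarrow> int) \<Rightarrow> nat \<Rightarrow> int poly" where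
  "G a m = det (tri (\<lambda>i. [:-(gA a i), gA a i:]) (\<lambda>_. [:0,1:]) (\<lambda>_. [:-1,0:]) m)"

lemma div2_sign: "((-1)^i * (2 * x)) div 2 = (-1)^i * (x::int)"
  by (cases "even i") auto

lemma alex_L: "alexander_poly (map (\<lambda>k. (-1) ^ (k - 1) * (2 * a k)) [1..<m+1]) = G a m"
proof -
  have len: "length (map (\<lambda>k. (-1) ^ (k - 1) * (2 * a k)) [1..<m+1]) = m" by simp
  show ?thesis
    unfolding alex_tri G_def len
    by (rule arg_cong[where f=det], rule tri_cong) (simp add: gA_def div2_sign nth_map_upt del: upt_Suc)
qed

lemma G_0: "G a 0 = 1" unfolding G_def by (rule det_dim_zero) (simp add: tri_def)
lemma G_1: "G a (Suc 0) = [:-(gA a 0), gA a 0:]" unfolding G_def using tri_1 by simp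
lemma G_rec: "G a (Suc (Suc k)) = [:-(gA a (Suc k)), gA a (Suc k):] * G a (Suc k) - [:0,1:] * [:-1,0:] * G a k"
  unfolding G_def by (rule tri_rec)

lemma two_step_induct:
  assumes "P 0" "P (Suc 0)" "\<And>k. P k \<Longrightarrow> P (Suc k) \<Longrightarrow> P (Suc (Suc k))"
  shows "P n"
proof -
  have "P n \<and> P (Suc n)" by (induction n) (use assms in auto)
  then show ?thesis by simp
qed

fun eps :: "nat \<Rightarrow> real" where
  "eps 0 = 1" | "eps (Suc 0) = 1" | "eps (Suc (Suc k)) = - eps k"

lemma eps_Suc: "eps (Suc k) = (-1)^k * eps k"
  by (induction k rule: eps.induct) auto

lemma eps_nz: "eps k \<noteq> 0"
  by (induction k rule: eps.induct) auto

lemma R_pt: "poly (map_poly of_int (G a m)) x = eps m * poly (E (\<lambda>i. of_int (a i)) m) x"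
proof (induction m rule: two_step_induct)
  case 1 then show ?case by (simp add: G_0)
next
  case 2 then show ?case
    by (simp only: G_1 of_int_hom.map_poly_pCons_hom) (simp add: gA_def algebra_simps)
next
  case (3 k)
  let ?ar = "\<lambda>i. real_of_int (a i)"
  let ?A = "?ar (Suc (Suc k))"
  let ?E1 = "poly (E ?ar (Suc k)) x" and ?E0 = "poly (E ?ar k) x"
  have IH1: "poly (map_poly of_int (G a (Suc k))) x = eps (Suc k) * ?E1" using 3(2) by simp
  have IH0: "poly (map_poly of_int (G a k)) x = eps k * ?E0" using 3(1) by simp
  let ?c = "real_of_int (gA a (Suc k))"
  have c: "?c = (-1)^(Suc k) * ?A" by (simp add: gA_def)
  have m: "map_poly (of_int :: int \<Rightarrow> real) (G a (Suc (Suc k)))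
     = [:-?c, ?c:] * map_poly of_int (G a (Suc k)) - [:0,1:] * [:-1,0:] * map_poly of_int (G a k)"
    unfolding G_rec
    by (simp only: of_int_poly_hom.hom_mult of_int_poly_hom.hom_minus of_int_hom.map_poly_pCons_hom) simp
  have "poly (map_poly of_int (G a (Suc (Suc k)))) x
      = (?c * (x - 1)) * poly (map_poly of_int (G a (Suc k))) x + x * poly (map_poly of_int (G a k)) x"
    unfolding m by (simp add: algebra_simps)
  also have "?c * (x - 1) = ((-1)^(Suc k) * ?A) * (x - 1)" by (simp only: c)
  finally have "poly (map_poly of_int (G a (Suc (Suc k)))) x
      = ((-1)^(Suc k) * ?A) * (x - 1) * poly (map_poly of_int (G a (Suc k))) x + x * poly (map_poly of_int (G a k)) x" .
  also have "\<dots> = ((-1)^(Suc k) * ?A) * (x - 1) * (eps (Suc k) * ?E1) + x * (eps k * ?E0)"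
    by (simp only: IH1 IH0)
  also have "\<dots> = ?A * (x - 1) * ((-1)^(Suc k) * eps (Suc k)) * ?E1 + x * eps k * ?E0"
    by (simp only: mult_ac)
  also have "(-1)^(Suc k) * eps (Suc k) = eps (Suc (Suc k))"
  proof -
    have "(-1::real)^k * (-1)^k = 1" by (simp flip: power_mult_distrib)
    then show ?thesis by (simp add: eps_Suc mult.assoc[symmetric])
  qed
  also have "?A * (x - 1) * eps (Suc (Suc k)) * ?E1 + x * eps k * ?E0
      = eps (Suc (Suc k)) * (?A * (x - 1) * ?E1 - x * ?E0)"
    by (simp add: algebra_simps)
  also have "\<dots> = eps (Suc (Suc k)) * poly (E ?ar (Suc (Suc k))) x"
    by (simp only: E_poly2)
  finally show ?case .
qed

lemma R_eq: "alexander_poly_real (map (\<lambda>k. (-1) ^ (k - 1) * (2 * a k)) [1..<m+1])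
   = smult (eps m) (E (\<lambda>i. of_int (a i)) m)"
  unfolding alexander_poly_real_def alex_L
  by (rule poly_eq_poly_eq_iff[THEN iffD1]) (simp add: R_pt fun_eq_iff)




interpretation ofr: map_poly_inj_idom_hom "of_real :: real \<Rightarrow> complex" by (unfold_locales; auto)

lemma sorted_le: "sorted_wrt (<) (xs::real list) \<Longrightarrow> i \<le> j \<Longrightarrow> j < length xs \<Longrightarrow> xs!i \<le> xs!j"
  using sorted_wrt_nth_less[of "(<)" xs i j] by (cases "i = j") auto

lemma complex_roots:
  fixes p :: "real poly"
  assumes "p \<noteq> 0" "degree p = length ws" "distinct ws" "\<forall>w\<in>set ws. poly p w = 0"
  shows "proots (map_poly complex_of_real p) = mset (map complex_of_real ws)"
proof -
  have "map_poly complex_of_real p \<noteq> 0" using assms(1) by simp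
  moreover have "degree (map_poly complex_of_real p) \<le> length (map complex_of_real ws)" using assms(2) by simp
  moreover have "distinct (map complex_of_real ws)"
    by (rule distinct_map[THEN iffD2]) (use assms(3) in \<open>auto simp: inj_on_def\<close>)
  moreover have "\<forall>z\<in>set (map complex_of_real ws). poly (map_poly complex_of_real p) z = 0"
    using assms(4) by auto
  ultimately show ?thesis by (rule roots_full)
qed

lemma real_rooted_I:
  fixes p :: "real poly"
  assumes "p \<noteq> 0" "degree p = length ws" "distinct ws" "\<forall>w\<in>set ws. poly p w = 0"
  shows "real_rooted p"
  unfolding real_rooted_def
proof (intro allI impI)
  fix z assume z: "poly (map_poly complex_of_real p) z = 0"
  have nz: "map_poly complex_of_real p \<noteq> 0" using assms(1) by simp
  then have "order z (map_poly complex_of_real p) \<noteq> 0" using z order_root by blast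
  then have "count (proots (map_poly complex_of_real p)) z \<noteq> 0" using nz by (simp add: count_proots)
  then have "z \<in> set (map complex_of_real ws)" unfolding complex_roots[OF assms]
    by (metis count_eq_zero_iff set_mset_mset)
  then show "z \<in> \<real>" by auto
qed

theorem theorem9p4:
  fixes n :: nat and a :: "nat \<Rightarrow> int"
  assumes "n \<ge> 2"
    and "\<And>k. 1 \<le> k \<Longrightarrow> k \<le> n \<Longrightarrow> a k > 0"
  defines "s \<equiv> map (\<lambda>k. (-1) ^ (k - 1) * (2 * a k)) [1..<n+1]"
    and "s' \<equiv> map (\<lambda>k. (-1) ^ (k - 1) * (2 * a k)) [1..<n]"
  shows "real_rooted (alexander_poly_real s) \<and> real_rooted (alexander_poly_real s')
    \<and> no_repeated_zeros (alexander_poly_real s * alexander_poly_real s')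
    \<and> interlaced (alexander_poly_real s) (alexander_poly_real s')"
proof -
  define ar where "ar = (\<lambda>i. real_of_int (a i))"
  have apos: "\<forall>i. 1 \<le> i \<and> i \<le> n \<longrightarrow> ar i > 0" using assms(2) by (simp add: ar_def)
  define P where "P = alexander_poly_real s"
  define Q where "Q = alexander_poly_real s'"
  have Peq: "P = smult (eps n) (E ar n)" unfolding P_def s_def ar_def by (rule R_eq)
  have "[1..<n] = [1..<(n-1)+1]" using assms(1) by simp
  then have Qeq: "Q = smult (eps (n-1)) (E ar (n-1))" unfolding Q_def s'_def ar_def by (simp only: R_eq)
  have n1: "1 \<le> n - 1" "Suc (n - 1) = n" using assms(1) by auto
  obtain ys where ys: "Inv ar (n-1) ys" using Inv_exists[OF apos n1(1)] by auto
  obtain ws where ws: "Inv ar n ws" and il: "\<forall>i<n-1. ws!i < ys!i \<and> ys!i < ws!(Suc i)"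
    using Inv_step[OF apos n1(1) _ ys] n1(2) by auto
  have lw: "length ws = n" "sorted_wrt (<) ws" "\<forall>w\<in>set ws. poly P w = 0"
    using ws unfolding Inv_def Peq by auto
  have ly: "length ys = n - 1" "sorted_wrt (<) ys" "\<forall>y\<in>set ys. poly Q y = 0"
    using ys unfolding Inv_def Qeq by auto
  have dw: "distinct ws" using sorted_less_distinct[OF lw(2)] .
  have dy: "distinct ys" using sorted_less_distinct[OF ly(2)] .
  have P0: "P \<noteq> 0" "degree P = n" using E_degree[OF apos, of n] eps_nz[of n] unfolding Peq by auto
  have Q0: "Q \<noteq> 0" "degree Q = n - 1" using E_degree[OF apos, of "n-1"] eps_nz[of "n-1"] unfolding Qeq by auto
  have disj: "set ws \<inter> set ys = {}"
  proof (rule ccontr)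
    assume "set ws \<inter> set ys \<noteq> {}"
    then obtain x where "x \<in> set ws" "x \<in> set ys" by blast
    then obtain i j where i: "i < n" "ws!i = x" and j: "j < n - 1" "ys!j = x"
      using lw(1) ly(1) by (auto simp: in_set_conv_nth)
    show False
    proof (cases "i \<le> j")
      case True
      then have "ys!i \<le> ys!j" using sorted_le[OF ly(2) True] j ly(1) by simp
      moreover have "ws!i < ys!i" using il True j by auto
      ultimately show False using i j by simp
    next
      case False
      then have "ws!(Suc j) \<le> ws!i" using sorted_le[OF lw(2), of "Suc j" i] i lw(1) by simp
      moreover have "ys!j < ws!(Suc j)" using il j by auto
      ultimately show False using i j by simp
    qed
  qed
  have rP: "proots P = mset ws" using roots_full[of P ws] P0 lw dw by simp
  have rQ: "proots Q = mset ys" using roots_full[of Q ys] Q0 ly dy by simp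
  have sw: "sort ws = ws" using lw(2) by (simp add: sorted_sort_id strict_sorted_iff)
  have sy: "sort ys = ys" using ly(2) by (simp add: sorted_sort_id strict_sorted_iff)
  have inter: "interlaced P Q"
    unfolding interlaced_def rP rQ sorted_list_of_multiset_mset sw sy interlaced_lists_def
    using lw(1) ly(1) il n1 by (auto intro: less_imp_le)
  have rrP: "real_rooted P" using real_rooted_I[of P ws] P0 lw dw by simp
  have rrQ: "real_rooted Q" using real_rooted_I[of Q ys] Q0 ly dy by simp
  have PQ0: "P * Q \<noteq> 0" using P0 Q0 by simp
  have dPQ: "degree (P * Q) = length (ws @ ys)" using P0 Q0 lw(1) ly(1) n1 by (simp add: degree_mult_eq)
  have dwy: "distinct (ws @ ys)" using dw dy disj by simp
  have rwy: "\<forall>w\<in>set (ws @ ys). poly (P * Q) w = 0" using lw(3) ly(3) by auto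
  have cr: "proots (map_poly complex_of_real (P * Q)) = mset (map complex_of_real (ws @ ys))"
    by (rule complex_roots[OF PQ0 dPQ dwy rwy])
  have dc: "distinct (map complex_of_real (ws @ ys))"
    by (rule distinct_map[THEN iffD2]) (use dwy in \<open>auto simp: inj_on_def\<close>)
  have nrz: "no_repeated_zeros (P * Q)"
    unfolding no_repeated_zeros_def rsquarefree_def
  proof (intro conjI allI)
    show nz: "map_poly complex_of_real (P * Q) \<noteq> 0" using PQ0 by simp
    fix x
    have "order x (map_poly complex_of_real (P * Q)) = count (proots (map_poly complex_of_real (P * Q))) x"
      using nz by (simp add: count_proots)
    then have "order x (map_poly complex_of_real (P * Q)) = count (mset (map complex_of_real (ws @ ys))) x"
      by (simp only: cr)
    then show "order x (map_poly complex_of_real (P * Q)) = 0 \<or> order x (map_poly complex_of_real (P * Q)) = 1"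
      using dc by (simp only: distinct_count_atmost_1) (auto split: if_splits)
  qed
  show ?thesis using rrP rrQ nrz inter unfolding P_def Q_def by blast
qed


end
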